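(* For all integers $n\geq 1$ and $1\leq k\leq n$, $$\bigl|\{e\in\mathbf{I}_n(\underline{12}0):\mathrm{zero}(e)=k\}\bigr|=c_{n,k},$$ where the numbers $c_{n,k}$ are defined by $c_{1,1}=1$, $c_{n,0}=0$ for $n\geq1$, and $c_{n,k}=c_{n-1,k-1}+k\sum_{j=k}^{n-1}c_{n-1,j}$ for $n\geq 2$ and $1\leq k\leq n$ (with $c_{n-1,j}=0$ for $j>n-1$).
   Context: An inversion sequence of length $n$ is an integer sequence $e=e_1e_2\ldots e_n$ with $0\leq e_i<i$ for all $i$; the set of these is $\mathbf{I}_n$. A sequence $e$ avoids the vincular pattern $\underline{12}0$ if there are no indices $2\leq i<j\leq n$ with $e_j<e_{i-1}<e_i$; $\mathbf{I}_n(\underline{12}0)$ is the set of $\underline{12}0$-avoiding inversion sequences of length $n$. $\mathrm{zero}(e)$ is the number of entries of $e$ equal to $0$. *)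

theory Defs
  imports Main
begin

text \<open>Inversion sequences of length n, represented as lists e with
  e ! (i-1) = e_i (so the condition 0 \<le> e_i < i becomes e ! i \<le> i for i < n).\<close>
definition inv_seqs :: "nat \<Rightarrow> nat list set" where
  "inv_seqs n = {e. length e = n \<and> (\<forall>i<n. e ! i < i + 1)}"

text \<open>Avoidance of the vincular pattern 12-0: no indices 2 \<le> i < j \<le> n with
  e_j < e_(i-1) < e_i (translated to 0-based list positions).\<close>
definition avoids_12_0 :: "nat list \<Rightarrow> bool" where
  "avoids_12_0 e \<longleftrightarrow>
     \<not> (\<exists>i j. 2 \<le> i \<and> i < j \<and> j \<le> length e \<and>
              e ! (j - 1) < e ! (i - 2) \<and> e ! (i - 2) < e ! (i - 1))"

definition zero :: "nat list \<Rightarrow> nat" where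
  "zero e = length (filter (\<lambda>x. x = 0) e)"

text \<open>The numbers c(n,k): c(1,1)=1, c(n,0)=0 for n \<ge> 1,
  c(n,k) = c(n-1,k-1) + k * sum_{j=k}^{n-1} c(n-1,j) for n \<ge> 2, 1 \<le> k \<le> n,
  with c(n,k) = 0 for k > n. (c(0,_) is not used; set to 0.)\<close>
fun c :: "nat \<Rightarrow> nat \<Rightarrow> nat" where
  "c 0 k = 0"
| "c (Suc 0) k = (if k = 1 then 1 else 0)"
| "c (Suc (Suc m)) k =
     (if k = 0 \<or> k > Suc (Suc m) then 0
      else c (Suc m) (k - 1) + k * (\<Sum>j=k..Suc m. c (Suc m) j))"

end

theory Submission
  imports Defs
begin

fun bnd :: "nat \<Rightarrow> nat list \<Rightarrow> bool" where
  "bnd s [] = True"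
| "bnd s (x # xs) = (x \<le> s \<and> bnd (Suc s) xs)"

fun av :: "nat list \<Rightarrow> bool" where
  "av [] = True"
| "av [x] = True"
| "av (x # y # ys) = ((x < y \<longrightarrow> (\<forall>z\<in>set ys. x \<le> z)) \<and> av (y # ys))"

lemma bnd_nth: "bnd s xs \<longleftrightarrow> (\<forall>i<length xs. xs ! i \<le> s + i)"
proof (induction xs arbitrary: s)
  case Nil then show ?case by simp
next
  case (Cons x xs)
  show ?case
  proof
    assume "bnd s (x # xs)"
    then show "\<forall>i<length (x # xs). (x # xs) ! i \<le> s + i"
      using Cons by (auto simp: nth_Cons split: nat.splits)
  next
    assume H: "\<forall>i<length (x # xs). (x # xs) ! i \<le> s + i"
    have "x \<le> s" using H by (metis add_0_right length_Cons nth_Cons_0 zero_less_Suc)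
    moreover have "\<forall>i<length xs. xs ! i \<le> Suc s + i"
      using H by (metis Suc_less_eq add_Suc_shift length_Cons nth_Cons_Suc add_Suc)
    ultimately show "bnd s (x # xs)" using Cons by simp
  qed
qed

lemma bnd_append: "bnd s (xs @ ys) \<longleftrightarrow> bnd s xs \<and> bnd (s + length xs) ys"
  by (induction xs arbitrary: s) auto

lemma bnd_mono: "bnd s xs \<Longrightarrow> s \<le> t \<Longrightarrow> bnd t xs"
  by (induction xs arbitrary: s t) auto

lemma bnd_take_drop: "bnd s Q \<Longrightarrow> bnd s (take n Q) \<and> bnd (s + length (take n Q)) (drop n Q)"
  using bnd_append[of s "take n Q" "drop n Q"] by (simp only: append_take_drop_id)

lemma bnd_map_Suc: "bnd (Suc s) (map Suc xs) \<longleftrightarrow> bnd s xs"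
  by (induction xs arbitrary: s) auto

lemma bnd_set: "bnd s xs \<Longrightarrow> set xs \<subseteq> {..s + length xs}"
  by (induction xs arbitrary: s) fastforce+

lemma av0: "av (0 # ys) = av ys"
  by (cases ys) auto

lemma av_tl: "av (x # xs) \<Longrightarrow> av xs"
  by (cases xs) auto

lemma av_map_Suc: "av (map Suc xs) = av xs"
  by (induction xs rule: av.induct) auto

lemma av_split0: "av (xs @ 0 # ys) \<longleftrightarrow> av (xs @ [0]) \<and> av ys"
proof (induction xs)
  case Nil then show ?case by (simp add: av0)
next
  case (Cons x xs)
  show ?case
  proof (cases xs)
    case Nil then show ?thesis by (simp add: av0)
  next
    case (Cons y ys')
    then show ?thesis using Cons.IH by auto
  qed
qed

lemma av_cons_ge: "av ys \<Longrightarrow> (ys \<noteq> [] \<Longrightarrow> hd ys \<le> v) \<Longrightarrow> av (v # ys)"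
  by (cases ys) auto

lemma zero_append[simp]: "zero (xs @ ys) = zero xs + zero ys"
  by (simp add: zero_def)
lemma zero_Cons[simp]: "zero (x # ys) = (if x = 0 then Suc (zero ys) else zero ys)"
  by (simp add: zero_def)
lemma zero_Nil[simp]: "zero [] = 0"
  by (simp add: zero_def)

lemma zero_take_drop: "zero (take n xs) + zero (drop n xs) = zero xs"
proof -
  have "zero xs = zero (take n xs @ drop n xs)" by simp
  then show ?thesis by (simp only: zero_append)
qed

lemma zero_split: "Suc k \<le> zero e \<Longrightarrow> \<exists>Q R. e = Q @ 0 # R \<and> zero Q = k"
proof (induction e arbitrary: k)
  case Nil then show ?case by simp
next
  case (Cons x e)
  show ?case
  proof (cases "x = 0")
    case True
    show ?thesis
    proof (cases k)
      case 0 then show ?thesis using True by (rule_tac x="[]" in exI) auto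
    next
      case (Suc k')
      then have "Suc k' \<le> zero e" using Cons.prems True by simp
      then obtain Q R where "e = Q @ 0 # R" "zero Q = k'" using Cons.IH by blast
      then show ?thesis using True Suc by (rule_tac x="0 # Q" in exI) auto
    qed
  next
    case False
    then have "Suc k \<le> zero e" using Cons.prems by simp
    then obtain Q R where "e = Q @ 0 # R" "zero Q = k" using Cons.IH by blast
    then show ?thesis using False by (rule_tac x="x # Q" in exI) auto
  qed
qed

lemma zero_split_uniq: "Q1 @ 0 # R1 = Q2 @ 0 # R2 \<Longrightarrow> zero Q1 = zero Q2 \<Longrightarrow> Q1 = Q2 \<and> R1 = R2"
proof (induction Q1 arbitrary: Q2)
  case Nil
  then show ?case by (cases Q2) auto
next
  case (Cons x Q1)
  then show ?case by (cases Q2) (auto split: if_splits)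
qed

definition avI :: "nat list \<Rightarrow> bool" where
  "avI xs \<longleftrightarrow> (\<forall>i j. Suc i < j \<and> j < length xs \<and> xs!i < xs!(Suc i) \<longrightarrow> xs!i \<le> xs!j)"

lemma avI_Cons2: "avI (x # y # ys) \<longleftrightarrow> (x < y \<longrightarrow> (\<forall>z\<in>set ys. x \<le> z)) \<and> avI (y # ys)"
proof
  assume H: "avI (x # y # ys)"
  have A: "x < y \<longrightarrow> (\<forall>z\<in>set ys. x \<le> z)"
  proof (intro impI ballI)
    fix z assume "x < y" "z \<in> set ys"
    then obtain k where k: "k < length ys" "ys ! k = z" by (metis in_set_conv_nth)
    have "(x#y#ys) ! 0 \<le> (x#y#ys) ! (Suc (Suc k))"
      using H[unfolded avI_def, rule_format, of 0 "Suc (Suc k)"] k \<open>x < y\<close> by simp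
    then show "x \<le> z" using k by simp
  qed
  have B: "avI (y # ys)"
    unfolding avI_def
  proof (intro allI impI)
    fix i j assume "Suc i < j \<and> j < length (y # ys) \<and> (y # ys) ! i < (y # ys) ! Suc i"
    then show "(y # ys) ! i \<le> (y # ys) ! j"
      using H[unfolded avI_def, rule_format, of "Suc i" "Suc j"] by simp
  qed
  show "(x < y \<longrightarrow> (\<forall>z\<in>set ys. x \<le> z)) \<and> avI (y # ys)" using A B by blast
next
  assume H: "(x < y \<longrightarrow> (\<forall>z\<in>set ys. x \<le> z)) \<and> avI (y # ys)"
  show "avI (x # y # ys)"
    unfolding avI_def
  proof (intro allI impI)
    fix i j assume a: "Suc i < j \<and> j < length (x # y # ys) \<and> (x # y # ys) ! i < (x # y # ys) ! Suc i"
    show "(x # y # ys) ! i \<le> (x # y # ys) ! j"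
    proof (cases i)
      case 0
      define k where "k = j - 2"
      have "Suc 0 < j" using a 0 by simp
      then have jk: "j = Suc (Suc k)" unfolding k_def by arith
      have "k < length ys" using a jk by simp
      then show ?thesis using a H 0 jk by (simp add: nth_mem)
    next
      case (Suc i')
      define j' where "j' = j - 1"
      have jj: "j = Suc j'" using a unfolding j'_def by simp
      have "Suc i' < j' \<and> j' < length (y # ys) \<and> (y # ys) ! i' < (y # ys) ! Suc i'"
        using a Suc jj by simp
      then have "(y # ys) ! i' \<le> (y # ys) ! j'" using H unfolding avI_def by blast
      then show ?thesis using Suc jj by simp
    qed
  qed
qed

lemma av_avI: "av xs \<longleftrightarrow> avI xs"
proof (induction xs rule: av.induct)
  case 1 then show ?case by (simp add: avI_def)
next
  case (2 x) then show ?case by (simp add: avI_def)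
next
  case (3 x y ys) then show ?case by (simp add: avI_Cons2)
qed

lemma av_avoids: "av e \<longleftrightarrow> avoids_12_0 e"
proof
  assume "av e"
  then have H: "avI e" by (simp add: av_avI)
  show "avoids_12_0 e" unfolding avoids_12_0_def
  proof
    assume "\<exists>i j. 2 \<le> i \<and> i < j \<and> j \<le> length e \<and> e ! (j - 1) < e ! (i - 2) \<and> e ! (i - 2) < e ! (i - 1)"
    then obtain i j where ij: "2 \<le> i" "i < j" "j \<le> length e" "e ! (j - 1) < e ! (i - 2)" "e ! (i - 2) < e ! (i - 1)" by blast
    obtain a where a: "i = a + 2" using ij(1) by (metis le_add_diff_inverse2)
    obtain b where b: "j = b + 1" using ij(2) by (metis Suc_eq_plus1 less_imp_Suc_add)
    have "e ! a \<le> e ! b"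
      using H[unfolded avI_def, rule_format, of a b] ij a b by simp
    then show False using ij a b by simp
  qed
next
  assume H: "avoids_12_0 e"
  have "avI e" unfolding avI_def
  proof (intro allI impI)
    fix i j assume a: "Suc i < j \<and> j < length e \<and> e ! i < e ! Suc i"
    show "e ! i \<le> e ! j"
    proof (rule ccontr)
      assume "\<not> e ! i \<le> e ! j"
      then have "2 \<le> i + 2 \<and> i + 2 < j + 1 \<and> j + 1 \<le> length e \<and> e ! (j + 1 - 1) < e ! (i + 2 - 2) \<and> e ! (i + 2 - 2) < e ! (i + 2 - 1)"
        using a by simp
      then show False using H unfolding avoids_12_0_def by blast
    qed
  qed
  then show "av e" by (simp add: av_avI)
qed


definition PP :: "nat \<Rightarrow> nat \<Rightarrow> nat list set" where
  "PP q k = {Q. length Q = q \<and> bnd 0 Q \<and> av (Q @ [0]) \<and> zero Q = k}"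

definition insF :: "nat list \<Rightarrow> nat \<Rightarrow> nat list" where
  "insF Q i = take (Suc i) Q @ Suc i # drop (Suc i) Q"

lemma finite_bnd: "finite {Q. length Q = q \<and> bnd s Q}"
proof -
  have "{Q. length Q = q \<and> bnd s Q} \<subseteq> {Q. set Q \<subseteq> {..s + q} \<and> length Q = q}"
    using bnd_set by fastforce
  moreover have "finite {Q. set Q \<subseteq> {..s + q} \<and> length Q = q}"
    by (rule finite_lists_length_eq) simp
  ultimately show ?thesis by (rule finite_subset)
qed

lemma finite_PP: "finite (PP q k)"
  by (rule finite_subset[OF _ finite_bnd[of q 0]]) (auto simp: PP_def)

lemma insF_nth_self: "i < length Q \<Longrightarrow> insF Q i ! Suc i = Suc i"
  by (simp add: insF_def nth_append min_def)

lemma insF_nth_gt: "Suc i < j \<Longrightarrow> j \<le> length Q \<Longrightarrow> insF Q i ! j = Q ! (j - 1)"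
proof -
  assume a: "Suc i < j" "j \<le> length Q"
  have "insF Q i ! j = (Suc i # drop (Suc i) Q) ! (j - Suc i)"
    using a by (simp add: insF_def nth_append min_def)
  also have "\<dots> = drop (Suc i) Q ! (j - Suc i - 1)"
    using a by (simp add: nth_Cons')
  also have "\<dots> = Q ! (Suc i + (j - Suc i - 1))" using a by (simp add: nth_drop)
  also have "Suc i + (j - Suc i - 1) = j - 1" using a by arith
  finally show ?thesis .
qed

lemma zero_card: "card {i. i < length Q \<and> Q ! i = 0} = zero Q"
  by (simp add: zero_def length_filter_conv_card)

lemma PP_Cons_in: "Q \<in> PP q k \<Longrightarrow> 0 # Q \<in> PP (Suc q) (Suc k)"
  by (auto simp: PP_def av0 intro: bnd_mono)

lemma PP_insF_in:
  assumes Q: "Q \<in> PP q (Suc k)" and i: "i < q" "Q ! i = 0"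
  shows "insF Q i \<in> PP (Suc q) (Suc k)"
proof -
  have lq: "length Q = q" and bq: "bnd 0 Q" and aq: "av (Q @ [0])" and zq: "zero Q = Suc k"
    using Q by (auto simp: PP_def)
  have len: "length (insF Q i) = Suc q" using lq i by (simp add: insF_def)
  have lt: "length (take (Suc i) Q) = Suc i" using lq i by simp
  have b1: "bnd 0 (take (Suc i) Q)" and b2: "bnd (Suc i) (drop (Suc i) Q)"
    using bnd_take_drop[OF bq, of "Suc i"] unfolding lt by simp_all
  have bnd: "bnd 0 (insF Q i)"
    using b1 b2 lq i by (auto simp: insF_def bnd_append min_def intro: bnd_mono)
  have tk: "take (Suc i) Q = take i Q @ [0]" using i lq by (simp add: take_Suc_conv_app_nth)
  have e1: "insF Q i @ [0] = take i Q @ 0 # (Suc i # (drop (Suc i) Q @ [0]))"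
    by (simp add: insF_def tk)
  have "Q = take i Q @ Q ! i # drop (Suc i) Q" by (rule id_take_nth_drop) (simp add: i lq)
  then have e2: "Q @ [0] = take i Q @ 0 # (drop (Suc i) Q @ [0])" using i by simp
  have a1: "av (take i Q @ [0])" and a2: "av (drop (Suc i) Q @ [0])"
    using aq e2 av_split0[of "take i Q" "drop (Suc i) Q @ [0]"] by auto
  have hd: "hd (drop (Suc i) Q @ [0]) \<le> Suc i"
  proof (cases "drop (Suc i) Q")
    case Nil then show ?thesis by simp
  next
    case (Cons y ys)
    then have "Q ! Suc i = y" by (rule nth_via_drop)
    moreover have "Suc i < length Q" using Cons by (metis drop_eq_Nil leI list.simps(3))
    ultimately have "y \<le> Suc i" using bq by (auto simp: bnd_nth)
    then show ?thesis using Cons by simp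
  qed
  have "av (Suc i # (drop (Suc i) Q @ [0]))"
    using a2 hd by (intro av_cons_ge) auto
  then have av: "av (insF Q i @ [0])" using a1 e1 av_split0[of "take i Q" "Suc i # (drop (Suc i) Q @ [0])"] by auto
  have "zero (insF Q i) = zero (take (Suc i) Q) + zero (drop (Suc i) Q)" by (simp add: insF_def)
  also have "\<dots> = zero Q" by (rule zero_take_drop)
  finally have z: "zero (insF Q i) = Suc k" using zq by simp
  show ?thesis using len bnd av z by (simp add: PP_def)
qed

lemma PP_cover:
  assumes Q: "Q \<in> PP (Suc q) (Suc k)"
  shows "Q \<in> Cons 0 ` PP q k \<union> (\<lambda>(Q, i). insF Q i) ` (SIGMA Q:PP q (Suc k). {i. i < q \<and> Q ! i = 0})"
proof -
  have lq: "length Q = Suc q" and bq: "bnd 0 Q" and aq: "av (Q @ [0])" and zq: "zero Q = Suc k"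
    using Q by (auto simp: PP_def)
  have bn: "\<And>s. s < Suc q \<Longrightarrow> Q ! s \<le> s" using bq lq by (simp add: bnd_nth)
  define M where "M = {t. 0 < t \<and> t < Suc q \<and> Q ! t = t}"
  show ?thesis
  proof (cases "M = {}")
    case True
    obtain x Q'' where QQ: "Q = x # Q''" using lq by (cases Q) auto
    have x0: "x = 0" using bn[of 0] QQ by simp
    have lq': "length Q'' = q" using lq QQ by simp
    have "bnd 0 Q''" unfolding bnd_nth
    proof (intro allI impI)
      fix s assume s: "s < length Q''"
      have "Q ! Suc s \<le> Suc s" using bn[of "Suc s"] s lq' by simp
      moreover have "Q ! Suc s \<noteq> Suc s" using True s lq' unfolding M_def by auto
      ultimately show "Q'' ! s \<le> 0 + s" using QQ by simp
    qed
    moreover have "av (Q'' @ [0])" using aq QQ x0 by (simp add: av0)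
    moreover have "zero Q'' = k" using zq QQ x0 by simp
    ultimately have "Q'' \<in> PP q k" using lq' by (simp add: PP_def)
    then show ?thesis using QQ x0 by blast
  next
    case False
    have fM: "finite M" unfolding M_def by simp
    define t where "t = Max M"
    have tM: "t \<in> M" using False fM unfolding t_def by simp
    have tmax: "\<And>t'. t' \<in> M \<Longrightarrow> t' \<le> t" using fM unfolding t_def by simp
    have t0: "0 < t" "t < Suc q" "Q ! t = t" using tM unfolding M_def by auto
    define i where "i = t - 1"
    have ti: "t = Suc i" using t0 unfolding i_def by simp
    have Qi: "Q ! i = 0"
    proof (rule ccontr)
      assume "Q ! i \<noteq> 0"
      have "avI (Q @ [0])" using aq by (simp add: av_avI)
      moreover have "Suc i < Suc q \<and> Suc q < length (Q @ [0]) \<and> (Q @ [0]) ! i < (Q @ [0]) ! Suc i"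
        using t0 ti bn[of i] lq by (simp add: nth_append)
      ultimately have "(Q @ [0]) ! i \<le> (Q @ [0]) ! Suc q" unfolding avI_def by blast
      then show False using \<open>Q ! i \<noteq> 0\<close> ti t0 lq by (simp add: nth_append)
    qed
    define Q' where "Q' = take t Q @ drop (Suc t) Q"
    have QQs: "take t Q @ t # drop (Suc t) Q = Q"
      using t0 lq id_take_nth_drop[of t Q] by simp
    have ins: "insF Q' i = Q"
    proof -
      have "take (Suc i) Q' = take t Q" using ti t0 lq by (simp add: Q'_def min_def)
      moreover have "drop (Suc i) Q' = drop (Suc t) Q" using ti t0 lq by (simp add: Q'_def min_def)
      ultimately have "insF Q' i = take t Q @ t # drop (Suc t) Q" using ti by (simp add: insF_def)
      then show ?thesis by (simp only: QQs)
    qed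
    have lq': "length Q' = q" using t0 lq by (simp add: Q'_def min_def)
    have bt: "bnd 0 (take t Q)" using bnd_take_drop[OF bq] by blast
    have bd: "bnd t (drop (Suc t) Q)" unfolding bnd_nth
    proof (intro allI impI)
      fix s assume s: "s < length (drop (Suc t) Q)"
      have "Q ! (Suc t + s) \<le> Suc t + s" using bn[of "Suc t + s"] s lq by simp
      moreover have "Q ! (Suc t + s) \<noteq> Suc t + s"
      proof
        assume "Q ! (Suc t + s) = Suc t + s"
        then have "Suc t + s \<in> M" using s lq unfolding M_def by auto
        then show False using tmax by fastforce
      qed
      ultimately show "drop (Suc t) Q ! s \<le> t + s" using s lq by simp
    qed
    have bQ': "bnd 0 Q'" using bt bd t0 lq by (simp add: Q'_def bnd_append min_def)
    have tk: "take t Q = take i Q @ [0]" using ti Qi t0 lq by (simp add: take_Suc_conv_app_nth)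
    have "Q @ [0] = (take t Q @ t # drop (Suc t) Q) @ [0]" by (simp only: QQs)
    also have "\<dots> = take i Q @ 0 # (t # (drop (Suc t) Q @ [0]))" by (simp add: tk)
    finally have E: "Q @ [0] = take i Q @ 0 # (t # (drop (Suc t) Q @ [0]))" .
    have "av (take i Q @ 0 # (t # (drop (Suc t) Q @ [0])))" by (subst E[symmetric]) (rule aq)
    then have H: "av (take i Q @ [0]) \<and> av (t # (drop (Suc t) Q @ [0]))"
      by (rule iffD1[OF av_split0])
    then have H2: "av (take i Q @ [0]) \<and> av (drop (Suc t) Q @ [0])" using av_tl by blast
    have E2: "Q' @ [0] = take i Q @ 0 # (drop (Suc t) Q @ [0])" by (simp add: Q'_def tk)
    have aQ': "av (Q' @ [0])"
      unfolding E2 using H2 by (rule iffD2[OF av_split0])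
    have "zero Q = zero (take t Q @ t # drop (Suc t) Q)" by (simp only: QQs)
    then have "zero Q = zero (take t Q) + zero (drop (Suc t) Q)" using t0 by simp
    then have zQ': "zero Q' = Suc k" using zq by (simp add: Q'_def)
    have Q'in: "Q' \<in> PP q (Suc k)" using lq' bQ' aQ' zQ' by (simp add: PP_def)
    have "i < q" using ti t0 by simp
    moreover have "Q' ! i = 0" using Qi ti t0 lq by (simp add: Q'_def nth_append min_def)
    ultimately have "(Q', i) \<in> (SIGMA Q:PP q (Suc k). {i. i < q \<and> Q ! i = 0})" using Q'in by simp
    then have "insF Q' i \<in> (\<lambda>(Q, i). insF Q i) ` (SIGMA Q:PP q (Suc k). {i. i < q \<and> Q ! i = 0})"
      by (rule rev_image_eqI) simp
    then show ?thesis using ins by simp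
  qed
qed

lemma insF_inj:
  assumes "Q1 \<in> PP q k" "Q2 \<in> PP q k" "i1 < q" "i2 < q" "insF Q1 i1 = insF Q2 i2"
  shows "Q1 = Q2 \<and> i1 = i2"
proof -
  have l: "length Q1 = q" "length Q2 = q" and b: "bnd 0 Q1" "bnd 0 Q2" using assms by (auto simp: PP_def)
  have neq: False if lt: "j1 < j2" and Qa: "length Qa = q" "bnd 0 Qa" and j2: "j2 < q"
    and eq: "insF Qa j1 = insF Qb j2" and lb: "length Qb = q" for Qa Qb j1 j2
  proof -
    have "insF Qb j2 ! Suc j2 = Suc j2" using j2 lb by (simp add: insF_nth_self)
    moreover have "insF Qa j1 ! Suc j2 = Qa ! j2" using lt j2 Qa by (simp add: insF_nth_gt)
    moreover have "Qa ! j2 \<le> j2" using Qa j2 by (simp add: bnd_nth)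
    ultimately show False using eq by simp
  qed
  have "i1 = i2"
  proof (rule ccontr)
    assume "i1 \<noteq> i2"
    then consider "i1 < i2" | "i2 < i1" by linarith
    then show False
    proof cases
      case 1 then show False using neq[of i1 i2 Q1 Q2] assms l b by blast
    next
      case 2 then show False using neq[of i2 i1 Q2 Q1] assms l b by simp
    qed
  qed
  moreover
  have "take (Suc i1) Q1 = take (Suc i1) Q2 \<and> drop (Suc i1) Q1 = drop (Suc i1) Q2"
    using assms(5) \<open>i1 = i2\<close> l assms(3) unfolding insF_def by (simp add: append_eq_append_conv)
  then have "Q1 = Q2" by (metis append_take_drop_id)
  ultimately show ?thesis by simp
qed

lemma card_PP_Suc: "card (PP (Suc q) (Suc k)) = card (PP q k) + Suc k * card (PP q (Suc k))"
proof -
  define S where "S = (SIGMA Q:PP q (Suc k). {i. i < q \<and> Q ! i = 0})"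
  have eq: "PP (Suc q) (Suc k) = Cons 0 ` PP q k \<union> (\<lambda>(Q, i). insF Q i) ` S"
  proof
    show "PP (Suc q) (Suc k) \<subseteq> Cons 0 ` PP q k \<union> (\<lambda>(Q, i). insF Q i) ` S"
      using PP_cover unfolding S_def by blast
    show "Cons 0 ` PP q k \<union> (\<lambda>(Q, i). insF Q i) ` S \<subseteq> PP (Suc q) (Suc k)"
      using PP_Cons_in PP_insF_in unfolding S_def by auto
  qed
  have fS: "finite S" unfolding S_def using finite_PP by auto
  have disj: "Cons 0 ` PP q k \<inter> (\<lambda>(Q, i). insF Q i) ` S = {}"
  proof (rule ccontr)
    assume "Cons 0 ` PP q k \<inter> (\<lambda>(Q, i). insF Q i) ` S \<noteq> {}"
    then obtain Q'' Q' i where a: "Q'' \<in> PP q k" "(Q', i) \<in> S" "0 # Q'' = insF Q' i" by auto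
    have "i < q" "length Q' = q" "length Q'' = q" "bnd 0 Q''" using a unfolding S_def PP_def by auto
    then have "insF Q' i ! Suc i = Suc i" "(0 # Q'') ! Suc i \<le> i" by (auto simp: insF_nth_self bnd_nth)
    then show False using a by simp
  qed
  have inj: "inj_on (\<lambda>(Q, i). insF Q i) S"
  proof (rule inj_onI)
    fix x y assume "x \<in> S" "y \<in> S" "(\<lambda>(Q, i). insF Q i) x = (\<lambda>(Q, i). insF Q i) y"
    then show "x = y" unfolding S_def
      using insF_inj[of "fst x" q "Suc k" "fst y" "snd x" "snd y"] by (cases x, cases y) auto
  qed
  have "card (PP (Suc q) (Suc k)) = card (Cons 0 ` PP q k) + card ((\<lambda>(Q, i). insF Q i) ` S)"
    unfolding eq using disj fS finite_PP by (simp add: card_Un_disjoint)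
  also have "\<dots> = card (PP q k) + card S"
    using inj by (simp add: card_image)
  also have "card S = (\<Sum>Q\<in>PP q (Suc k). card {i. i < q \<and> Q ! i = 0})"
    unfolding S_def using finite_PP by simp
  also have "\<dots> = (\<Sum>Q\<in>PP q (Suc k). Suc k)"
    by (rule sum.cong) (auto simp: PP_def zero_card[symmetric])
  finally show ?thesis by simp
qed

lemma PP_0: "PP 0 k = (if k = 0 then {[]} else {})"
  by (auto simp: PP_def)

lemma PP_Suc_0: "PP (Suc q) 0 = {}"
proof -
  { fix Q assume "Q \<in> PP (Suc q) 0"
    then have "length Q = Suc q" "bnd 0 Q" "zero Q = 0" by (auto simp: PP_def)
    then have False by (cases Q) auto }
  then show ?thesis by blast
qed


definition AA :: "nat \<Rightarrow> nat \<Rightarrow> nat list set" where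
  "AA n k = {e. length e = n \<and> bnd 0 e \<and> av e \<and> zero e = k}"
definition GG :: "nat \<Rightarrow> nat \<Rightarrow> nat list set" where
  "GG n k = {e. length e = n \<and> bnd 0 e \<and> av e \<and> k \<le> zero e}"
definition Wd :: "nat \<Rightarrow> nat \<Rightarrow> nat list set" where
  "Wd s l = {R. length R = l \<and> bnd s R \<and> av R}"
definition Wp :: "nat \<Rightarrow> nat \<Rightarrow> nat list set" where
  "Wp s l = {R. length R = l \<and> bnd s R \<and> av R \<and> zero R = 0}"

lemma finite_Wd: "finite (Wd s l)"
  by (rule finite_subset[OF _ finite_bnd[of l s]]) (auto simp: Wd_def)

lemma finite_Wp: "finite (Wp s l)"
  by (rule finite_subset[OF _ finite_bnd[of l s]]) (auto simp: Wp_def)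

lemma bnd_split0: "bnd s (Q @ 0 # R) \<longleftrightarrow> bnd s Q \<and> bnd (Suc (s + length Q)) R"
  by (simp add: bnd_append)

lemma split_card:
  assumes fin: "\<And>q. finite (X q)"
  shows "card (\<Union>q\<in>{..<n}. (\<lambda>(Q, R). Q @ 0 # R) ` (PP q k \<times> X q))
       = (\<Sum>q<n. card (PP q k) * card (X q))"
proof -
  have inj: "inj_on (\<lambda>(Q, R). Q @ 0 # R) (PP q k \<times> X q)" for q
  proof (rule inj_onI)
    fix x y assume "x \<in> PP q k \<times> X q" "y \<in> PP q k \<times> X q"
      "(\<lambda>(Q, R). Q @ 0 # R) x = (\<lambda>(Q, R). Q @ 0 # R) y"
    then show "x = y" using zero_split_uniq[of "fst x" "snd x" "fst y" "snd y"]
      by (cases x, cases y) (auto simp: PP_def)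
  qed
  have disj: "(\<lambda>(Q, R). Q @ 0 # R) ` (PP q1 k \<times> X q1) \<inter> (\<lambda>(Q, R). Q @ 0 # R) ` (PP q2 k \<times> X q2) = {}"
    if "q1 \<noteq> q2" for q1 q2
  proof (rule ccontr)
    assume "(\<lambda>(Q, R). Q @ 0 # R) ` (PP q1 k \<times> X q1) \<inter> (\<lambda>(Q, R). Q @ 0 # R) ` (PP q2 k \<times> X q2) \<noteq> {}"
    then obtain Q1 R1 Q2 R2 where a: "Q1 \<in> PP q1 k" "Q2 \<in> PP q2 k" "Q1 @ 0 # R1 = Q2 @ 0 # R2"
      by auto
    then have "Q1 = Q2" using zero_split_uniq[of Q1 R1 Q2 R2] by (auto simp: PP_def)
    then show False using a that by (auto simp: PP_def)
  qed
  have "card (\<Union>q\<in>{..<n}. (\<lambda>(Q, R). Q @ 0 # R) ` (PP q k \<times> X q))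
      = (\<Sum>q<n. card ((\<lambda>(Q, R). Q @ 0 # R) ` (PP q k \<times> X q)))"
    by (rule card_UN_disjoint) (use fin finite_PP disj in auto)
  also have "\<dots> = (\<Sum>q<n. card (PP q k \<times> X q))"
    by (rule sum.cong) (auto simp: card_image[OF inj])
  also have "\<dots> = (\<Sum>q<n. card (PP q k) * card (X q))"
    by (simp add: card_cartesian_product)
  finally show ?thesis .
qed

lemma GG_split: "GG n (Suc k) = (\<Union>q\<in>{..<n}. (\<lambda>(Q, R). Q @ 0 # R) ` (PP q k \<times> Wd (Suc q) (n - Suc q)))"
proof
  show "GG n (Suc k) \<subseteq> (\<Union>q\<in>{..<n}. (\<lambda>(Q, R). Q @ 0 # R) ` (PP q k \<times> Wd (Suc q) (n - Suc q)))"
  proof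
    fix e assume "e \<in> GG n (Suc k)"
    then have e: "length e = n" "bnd 0 e" "av e" "Suc k \<le> zero e" by (auto simp: GG_def)
    obtain Q R where QR: "e = Q @ 0 # R" "zero Q = k" using zero_split[OF e(4)] by blast
    have "Q \<in> PP (length Q) k" "R \<in> Wd (Suc (length Q)) (n - Suc (length Q))"
      using e QR av_split0[of Q R] by (auto simp: PP_def Wd_def bnd_split0)
    then have "(Q, R) \<in> PP (length Q) k \<times> Wd (Suc (length Q)) (n - Suc (length Q))" by simp
    then have "Q @ 0 # R \<in> (\<lambda>(Q, R). Q @ 0 # R) ` (PP (length Q) k \<times> Wd (Suc (length Q)) (n - Suc (length Q)))"
      by (rule rev_image_eqI) simp
    moreover have "length Q \<in> {..<n}" using e QR by simp
    ultimately show "e \<in> (\<Union>q\<in>{..<n}. (\<lambda>(Q, R). Q @ 0 # R) ` (PP q k \<times> Wd (Suc q) (n - Suc q)))"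
      unfolding QR(1) by (rule UN_I[rotated])
  qed
  show "(\<Union>q\<in>{..<n}. (\<lambda>(Q, R). Q @ 0 # R) ` (PP q k \<times> Wd (Suc q) (n - Suc q))) \<subseteq> GG n (Suc k)"
  proof
    fix e assume "e \<in> (\<Union>q\<in>{..<n}. (\<lambda>(Q, R). Q @ 0 # R) ` (PP q k \<times> Wd (Suc q) (n - Suc q)))"
    then obtain q where q: "q \<in> {..<n}" "e \<in> (\<lambda>(Q, R). Q @ 0 # R) ` (PP q k \<times> Wd (Suc q) (n - Suc q))"
      by (rule UN_E)
    obtain x where x: "e = (\<lambda>(Q, R). Q @ 0 # R) x" "x \<in> PP q k \<times> Wd (Suc q) (n - Suc q)"
      using q(2) by (rule imageE)
    obtain Q R where "x = (Q, R)" by (cases x)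
    then have "q < n" "Q \<in> PP q k" "R \<in> Wd (Suc q) (n - Suc q)" "e = Q @ 0 # R"
      using q x by auto
    then show "e \<in> GG n (Suc k)"
      using av_split0[of Q R] by (auto simp: GG_def PP_def Wd_def bnd_split0)
  qed
qed

lemma AA_split: "AA n (Suc k) = (\<Union>q\<in>{..<n}. (\<lambda>(Q, R). Q @ 0 # R) ` (PP q k \<times> Wp (Suc q) (n - Suc q)))"
proof
  show "AA n (Suc k) \<subseteq> (\<Union>q\<in>{..<n}. (\<lambda>(Q, R). Q @ 0 # R) ` (PP q k \<times> Wp (Suc q) (n - Suc q)))"
  proof
    fix e assume "e \<in> AA n (Suc k)"
    then have e: "length e = n" "bnd 0 e" "av e" "zero e = Suc k" by (auto simp: AA_def)
    obtain Q R where QR: "e = Q @ 0 # R" "zero Q = k" using zero_split[of k e] e(4) by auto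
    have "Q \<in> PP (length Q) k" "R \<in> Wp (Suc (length Q)) (n - Suc (length Q))"
      using e QR av_split0[of Q R] by (auto simp: PP_def Wp_def bnd_split0)
    then have "(Q, R) \<in> PP (length Q) k \<times> Wp (Suc (length Q)) (n - Suc (length Q))" by simp
    then have "Q @ 0 # R \<in> (\<lambda>(Q, R). Q @ 0 # R) ` (PP (length Q) k \<times> Wp (Suc (length Q)) (n - Suc (length Q)))"
      by (rule rev_image_eqI) simp
    moreover have "length Q \<in> {..<n}" using e QR by simp
    ultimately show "e \<in> (\<Union>q\<in>{..<n}. (\<lambda>(Q, R). Q @ 0 # R) ` (PP q k \<times> Wp (Suc q) (n - Suc q)))"
      unfolding QR(1) by (rule UN_I[rotated])
  qed
  show "(\<Union>q\<in>{..<n}. (\<lambda>(Q, R). Q @ 0 # R) ` (PP q k \<times> Wp (Suc q) (n - Suc q))) \<subseteq> AA n (Suc k)"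
  proof
    fix e assume "e \<in> (\<Union>q\<in>{..<n}. (\<lambda>(Q, R). Q @ 0 # R) ` (PP q k \<times> Wp (Suc q) (n - Suc q)))"
    then obtain q where q: "q \<in> {..<n}" "e \<in> (\<lambda>(Q, R). Q @ 0 # R) ` (PP q k \<times> Wp (Suc q) (n - Suc q))"
      by (rule UN_E)
    obtain x where x: "e = (\<lambda>(Q, R). Q @ 0 # R) x" "x \<in> PP q k \<times> Wp (Suc q) (n - Suc q)"
      using q(2) by (rule imageE)
    obtain Q R where "x = (Q, R)" by (cases x)
    then have "q < n" "Q \<in> PP q k" "R \<in> Wp (Suc q) (n - Suc q)" "e = Q @ 0 # R"
      using q x by auto
    then show "e \<in> AA n (Suc k)"
      using av_split0[of Q R] by (auto simp: AA_def PP_def Wp_def bnd_split0)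
  qed
qed

lemma zero_map_Suc: "zero (map Suc R) = 0"
  by (induction R) auto

lemma zero0_iff: "zero R = 0 \<longleftrightarrow> (\<forall>x\<in>set R. x \<noteq> 0)"
  by (induction R) auto

lemma Wp_shift: "card (Wp (Suc s) l) = card (Wd s l)"
proof -
  have "Wp (Suc s) l = map Suc ` Wd s l"
  proof
    show "map Suc ` Wd s l \<subseteq> Wp (Suc s) l"
      by (auto simp: Wd_def Wp_def bnd_map_Suc av_map_Suc zero_map_Suc)
    show "Wp (Suc s) l \<subseteq> map Suc ` Wd s l"
    proof
      fix R assume R: "R \<in> Wp (Suc s) l"
      define R' where "R' = map (\<lambda>x. x - 1) R"
      have nz: "\<forall>x\<in>set R. x \<noteq> 0" using R unfolding Wp_def zero0_iff by blast
      have "map Suc R' = R" unfolding R'_def map_map by (rule map_idI) (use nz in auto)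
      moreover have "R' \<in> Wd s l"
        using R \<open>map Suc R' = R\<close> bnd_map_Suc[of s R'] av_map_Suc[of R']
        unfolding Wd_def Wp_def by (auto simp: R'_def)
      ultimately show "R \<in> map Suc ` Wd s l" by blast
    qed
  qed
  moreover have "inj_on (map Suc) (Wd s l)" by (simp add: inj_on_def)
  ultimately show ?thesis by (simp add: card_image)
qed

lemma card_GG_Suc: "card (GG n (Suc k)) = (\<Sum>q<n. card (PP q k) * card (Wd (Suc q) (n - Suc q)))"
  unfolding GG_split by (rule split_card) (rule finite_Wd)

lemma card_AA_Suc0: "card (AA (Suc n) (Suc k)) = (\<Sum>q<Suc n. card (PP q k) * card (Wd q (n - q)))"
proof -
  have "card (AA (Suc n) (Suc k)) = (\<Sum>q<Suc n. card (PP q k) * card (Wp (Suc q) (Suc n - Suc q)))"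
    unfolding AA_split by (rule split_card) (rule finite_Wp)
  also have "\<dots> = (\<Sum>q<Suc n. card (PP q k) * card (Wd q (n - q)))"
    by (simp add: Wp_shift)
  finally show ?thesis .
qed

lemma card_AA_Suc: "card (AA (Suc n) (Suc k)) = card (GG n k) + k * card (GG n (Suc k))"
proof (cases k)
  case 0
  have "card (AA (Suc n) (Suc k)) = (\<Sum>q<Suc n. card (PP q 0) * card (Wd q (n - q)))"
    using 0 card_AA_Suc0 by simp
  also have "\<dots> = card (Wd 0 n)"
    by (subst sum.lessThan_Suc_shift) (simp add: PP_0 PP_Suc_0)
  also have "Wd 0 n = GG n k" using 0 by (auto simp: Wd_def GG_def)
  finally show ?thesis using 0 by simp
next
  case (Suc k')
  have "card (AA (Suc n) (Suc k)) = (\<Sum>q<Suc n. card (PP q k) * card (Wd q (n - q)))"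
    by (rule card_AA_Suc0)
  also have "\<dots> = (\<Sum>q<n. card (PP (Suc q) k) * card (Wd (Suc q) (n - Suc q)))"
    by (subst sum.lessThan_Suc_shift) (simp add: PP_0 Suc)
  also have "\<dots> = (\<Sum>q<n. card (PP q k') * card (Wd (Suc q) (n - Suc q)))
                 + k * (\<Sum>q<n. card (PP q k) * card (Wd (Suc q) (n - Suc q)))"
    by (simp add: Suc card_PP_Suc algebra_simps sum.distrib sum_distrib_left)
  also have "\<dots> = card (GG n k) + k * card (GG n (Suc k))"
    by (simp add: Suc card_GG_Suc)
  finally show ?thesis .
qed

lemma zero_le_length: "zero e \<le> length e"
  by (simp add: zero_def)

lemma finite_AA: "finite (AA n k)"
  by (rule finite_subset[OF _ finite_bnd[of n 0]]) (auto simp: AA_def)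

lemma card_GG: "card (GG n k) = (\<Sum>j\<in>{k..n}. card (AA n j))"
proof -
  have "GG n k = (\<Union>j\<in>{k..n}. AA n j)"
  proof (rule set_eqI)
    fix e
    show "e \<in> GG n k \<longleftrightarrow> e \<in> (\<Union>j\<in>{k..n}. AA n j)"
      using zero_le_length[of e] by (auto simp: GG_def AA_def)
  qed
  moreover have "card (\<Union>j\<in>{k..n}. AA n j) = (\<Sum>j\<in>{k..n}. card (AA n j))"
  proof (rule card_UN_disjoint)
    show "finite {k..n}" by simp
    show "\<forall>i\<in>{k..n}. finite (AA n i)"
      using finite_AA by blast
    show "\<forall>i\<in>{k..n}. \<forall>j\<in>{k..n}. i \<noteq> j \<longrightarrow> AA n i \<inter> AA n j = {}"
      by (auto simp: AA_def)
  qed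
  ultimately show ?thesis by simp
qed

lemma AA_Suc_0: "AA (Suc n) 0 = {}"
proof -
  { fix e assume "e \<in> AA (Suc n) 0"
    then have "length e = Suc n" "bnd 0 e" "zero e = 0" by (auto simp: AA_def)
    then have False by (cases e) auto }
  then show ?thesis by blast
qed

lemma AA_1: "AA (Suc 0) k = (if k = 1 then {[0]} else {})"
proof -
  have "e \<in> AA (Suc 0) k \<longleftrightarrow> e = [0] \<and> k = 1" for e
  proof
    assume "e \<in> AA (Suc 0) k"
    then have "length e = Suc 0" "bnd 0 e" "zero e = k" by (auto simp: AA_def)
    then show "e = [0] \<and> k = 1" by (cases e) auto
  next
    assume "e = [0] \<and> k = 1" then show "e \<in> AA (Suc 0) k" by (simp add: AA_def)
  qed
  then show ?thesis by auto
qed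

lemma card_AA: "1 \<le> n \<Longrightarrow> card (AA n k) = c n k"
proof (induction n arbitrary: k rule: nat_induct_at_least)
  case base
  then show ?case by (simp add: AA_1)
next
  case (Suc n)
  then obtain m where m: "n = Suc m" by (cases n) auto
  show ?case
  proof (cases k)
    case 0
    then show ?thesis using m by (simp add: AA_Suc_0)
  next
    case (Suc j)
    have IH: "\<And>i. card (AA n i) = c n i" by (rule Suc.IH)
    have G: "\<And>k. card (GG n k) = (\<Sum>i\<in>{k..n}. c n i)" by (simp add: card_GG IH)
    have A: "card (AA (Suc n) k) = (\<Sum>i\<in>{j..n}. c n i) + j * (\<Sum>i\<in>{Suc j..n}. c n i)"
      using Suc card_AA_Suc G by simp
    show ?thesis
    proof (cases "j \<le> n")
      case True
      have "(\<Sum>i\<in>{j..n}. c n i) = c n j + (\<Sum>i\<in>{Suc j..n}. c n i)"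
        using True by (rule sum.atLeast_Suc_atMost)
      then show ?thesis using A Suc m True by simp
    next
      case False
      then show ?thesis using A Suc m by simp
    qed
  qed
qed


lemma goal_set: "{e \<in> inv_seqs n. avoids_12_0 e \<and> zero e = k} = AA n k"
proof (rule set_eqI)
  fix e
  have "(\<forall>i<length e. e ! i < i + 1) \<longleftrightarrow> bnd 0 e" by (auto simp: bnd_nth)
  then show "e \<in> {e \<in> inv_seqs n. avoids_12_0 e \<and> zero e = k} \<longleftrightarrow> e \<in> AA n k"
    by (auto simp: inv_seqs_def AA_def av_avoids)
qed

theorem mainTheorem2:
  fixes n k :: nat
  assumes "1 \<le> n" and "1 \<le> k" and "k \<le> n"
  shows "card {e \<in> inv_seqs n. avoids_12_0 e \<and> zero e = k} = c n k"
  unfolding goal_set using assms(1) by (rule card_AA)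

end
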